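(* Let $D\subset\mathbb{C}^n$ be an indecomposable central hyperplane arrangement of degree $d$, the cone of $Z=Z_1\cup\dots\cup Z_d\subset\mathbb{P}^{n-1}$. Let $k$ be an integer and $I\subset\{1,\dots,d-1\}$ with $|I|=k-1$, and put $Z(I)=\bigcup_{i\in I}Z_i$. Assume $k\ge n$ and $Z(I)\cup Z_d$ is a divisor with normal crossings on $\mathbb{P}^{n-1}$. Then $\dim V(I)'=\binom{k-1}{n-1}$.
   Context: Choose coordinates with $Z_d=\{x_n=0\}$, $Y'=\mathbb{P}^{n-1}\setminus Z_d\cong\mathbb{C}^{n-1}$, let $g_i$ ($i<d$) be a degree-one polynomial defining $Z_i\cap Y'$, $\omega_i=dg_i/g_i$, and let $h^\alpha$ be a formal generator, where $\alpha=(\alpha_i)$ with $\alpha_i=1-\frac kd$ for $i\in I$ and $\alpha_i=-\frac kd$ for $i\in\{1,\dots,d-1\}\setminus I$. $V(I)'$ is the $\mathbb{C}$-vector space of (twisted) rational $(n-1)$-forms on $Y'$ spanned by $\omega_{i_1}\wedge\dots\wedge\omega_{i_{n-1}}h^\alpha$ with $\{i_1,\dots,i_{n-1}\}\subset I$. Indecomposable: no nontrivial decomposition $\mathbb{C}^n=W'\times W''$ with $D$ the union of pull-backs of arrangements on $W',W''$. *)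

theory Defs
  imports "HOL-Library.Function_Algebras" "Jordan_Normal_Form.Determinant"
begin

text \<open>Vectors of C^n are modelled as functions nat => complex vanishing outside {0..<n};
  a linear form on C^n is given by its coefficient function a (a j = coefficient of x_(j+1)).\<close>

definition cvec :: "nat \<Rightarrow> (nat \<Rightarrow> complex) set" where
  "cvec n = {x. \<forall>j\<ge>n. x j = 0}"

definition lform :: "nat \<Rightarrow> (nat \<Rightarrow> complex) \<Rightarrow> (nat \<Rightarrow> complex) \<Rightarrow> complex" where
  "lform n a x = (\<Sum>j<n. a j * x j)"

definition lin_indep_fam :: "nat \<Rightarrow> (nat \<Rightarrow> nat \<Rightarrow> complex) \<Rightarrow> nat set \<Rightarrow> bool" where
  "lin_indep_fam n f S \<longleftrightarrow>
     (\<forall>c. (\<forall>j<n. (\<Sum>i\<in>S. c i * f i j) = 0) \<longrightarrow> (\<forall>i\<in>S. c i = 0))"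

text \<open>A central hyperplane arrangement in C^n of degree d: d nonzero linear forms
  f 1, ..., f d defining pairwise distinct hyperplanes Z_i = ker f_i.\<close>
definition central_arrangement :: "nat \<Rightarrow> nat \<Rightarrow> (nat \<Rightarrow> nat \<Rightarrow> complex) \<Rightarrow> bool" where
  "central_arrangement n d f \<longleftrightarrow>
     (\<forall>i\<in>{1..d}. \<exists>j<n. f i j \<noteq> 0) \<and>
     (\<forall>i\<in>{1..d}. \<forall>i'\<in>{1..d}. i \<noteq> i' \<longrightarrow> \<not> (\<exists>c. \<forall>j<n. f i j = c * f i' j))"

definition csubspace :: "nat \<Rightarrow> (nat \<Rightarrow> complex) set \<Rightarrow> bool" where
  "csubspace n W \<longleftrightarrow> W \<subseteq> cvec n \<and> (\<lambda>_. 0) \<in> W \<and>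
     (\<forall>x\<in>W. \<forall>y\<in>W. (\<lambda>j. x j + y j) \<in> W) \<and> (\<forall>c. \<forall>x\<in>W. (\<lambda>j. c * x j) \<in> W)"

text \<open>Decomposable: C^n = W' x W'' nontrivially (both factors nonzero, direct sum) such that
  every hyperplane Z_i is the pull-back of a hyperplane of W' (i.e. contains W'') or of W''
  (i.e. contains W').\<close>
definition indecomposable :: "nat \<Rightarrow> nat \<Rightarrow> (nat \<Rightarrow> nat \<Rightarrow> complex) \<Rightarrow> bool" where
  "indecomposable n d f \<longleftrightarrow>
     \<not> (\<exists>W1 W2. csubspace n W1 \<and> csubspace n W2 \<and>
          W1 \<noteq> {\<lambda>_. 0} \<and> W2 \<noteq> {\<lambda>_. 0} \<and> W1 \<inter> W2 = {\<lambda>_. 0} \<and>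
          (\<forall>x\<in>cvec n. \<exists>u\<in>W1. \<exists>v\<in>W2. x = (\<lambda>j. u j + v j)) \<and>
          (\<forall>i\<in>{1..d}. (\<forall>w\<in>W2. lform n (f i) w = 0) \<or> (\<forall>w\<in>W1. lform n (f i) w = 0)))"

text \<open>The union of the hyperplanes ker f_i (i in S) in P^(n-1) is a divisor with normal
  crossings: at every point of P^(n-1) (a nonzero x in C^n) the defining forms of the
  hyperplanes through that point are linearly independent.\<close>
definition normal_crossings :: "nat \<Rightarrow> (nat \<Rightarrow> nat \<Rightarrow> complex) \<Rightarrow> nat set \<Rightarrow> bool" where
  "normal_crossings n f S \<longleftrightarrow>
     (\<forall>x\<in>cvec n. (\<exists>j<n. x j \<noteq> 0) \<longrightarrow> lin_indep_fam n f {i\<in>S. lform n (f i) x = 0})"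

text \<open>Affine chart Y' = P^(n-1) minus {x_n = 0}, identified with C^(n-1) via y |-> [y : 1];
  g_i is the degree-one polynomial f_i(y,1).\<close>
definition gpoly :: "nat \<Rightarrow> (nat \<Rightarrow> nat \<Rightarrow> complex) \<Rightarrow> nat \<Rightarrow> (nat \<Rightarrow> complex) \<Rightarrow> complex" where
  "gpoly n f i y = lform n (f i) (y((n - 1) := 1))"

definition Ucompl :: "nat \<Rightarrow> nat \<Rightarrow> (nat \<Rightarrow> nat \<Rightarrow> complex) \<Rightarrow> (nat \<Rightarrow> complex) set" where
  "Ucompl n d f = {y\<in>cvec (n - 1). \<forall>i\<in>{1..d - 1}. gpoly n f i y \<noteq> 0}"

text \<open>omega_i = dg_i/g_i = sum_c (f i c / g_i) dy_c.  The (n-1)-form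
  omega_(s 0) wedge ... wedge omega_(s (n-2)) on C^(n-1) is identified with its coefficient
  of dy_0 wedge ... wedge dy_(n-2), namely the determinant of the coefficient matrix; it is a
  rational function, represented by its values on the dense open set Ucompl.\<close>
definition wedge_omega :: "nat \<Rightarrow> nat \<Rightarrow> (nat \<Rightarrow> nat \<Rightarrow> complex) \<Rightarrow> (nat \<Rightarrow> nat)
    \<Rightarrow> (nat \<Rightarrow> complex) \<Rightarrow> complex" where
  "wedge_omega n d f s y =
     (if y \<in> Ucompl n d f
      then det (mat (n - 1) (n - 1) (\<lambda>(r, c). f (s r) c / gpoly n f (s r) y))
      else 0)"

definition fscale :: "complex \<Rightarrow> ((nat \<Rightarrow> complex) \<Rightarrow> complex) \<Rightarrow> ((nat \<Rightarrow> complex) \<Rightarrow> complex)" where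
  "fscale c F = (\<lambda>y. c * F y)"

text \<open>V(I)': the complex span of the forms omega_(i_1) wedge ... wedge omega_(i_(n-1)) h^alpha
  with {i_1,...,i_(n-1)} a subset of I (the formal generator h^alpha is a common factor
  and does not affect the linear structure, so it is omitted).\<close>
definition Vprime :: "nat \<Rightarrow> nat \<Rightarrow> (nat \<Rightarrow> nat \<Rightarrow> complex) \<Rightarrow> nat set
    \<Rightarrow> ((nat \<Rightarrow> complex) \<Rightarrow> complex) set" where
  "Vprime n d f I = module.span fscale
     {wedge_omega n d f s | s. \<forall>r<n - 1. s r \<in> I}"

end

theory Submission
  imports Defs "HOL-Computational_Algebra.Polynomial"
begin

lemma vs_fscale: "vector_space fscale"
  by unfold_locales (auto simp: fscale_def algebra_simps fun_eq_iff)

lemma lin_indep_subset: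
  assumes "lin_indep_fam n f Z'" "Z \<subseteq> Z'" "finite Z'"
  shows "lin_indep_fam n f Z"
  unfolding lin_indep_fam_def
proof (intro allI impI ballI)
  fix c i assume h: "\<forall>j<n. (\<Sum>i\<in>Z. c i * f i j) = 0" and i: "i \<in> Z"
  define c' where "c' = (\<lambda>i. if i \<in> Z then c i else 0)"
  have "\<forall>j<n. (\<Sum>i\<in>Z'. c' i * f i j) = 0"
  proof (intro allI impI)
    fix j assume "j < n"
    have "(\<Sum>i\<in>Z'. c' i * f i j) = (\<Sum>i\<in>Z. c i * f i j)"
      using assms(2,3) by (subst sum.mono_neutral_right[of Z' Z]) (auto simp: c'_def)
    thus "(\<Sum>i\<in>Z'. c' i * f i j) = 0" using h \<open>j<n\<close> by simp
  qed
  hence "c' i = 0" using assms(1) i assms(2) unfolding lin_indep_fam_def by blast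
  thus "c i = 0" using i by (simp add: c'_def)
qed

lemma det_scale_rows:
  "det (mat m m (\<lambda>(r,c). h r * a r c)) = (\<Prod>r<m. h r) * det (mat m m (\<lambda>(r,c). a r c))"
proof -
  have "det (mat m m (\<lambda>(r,c). h r * a r c)) =
     (\<Sum>p\<in>{p. p permutes {0..<m}}. signof p * (\<Prod>i=0..<m. h i * a i (p i)))"
    by (subst det_def'[of _ m]) (auto intro!: sum.cong prod.cong)
  also have "\<dots> = (\<Sum>p\<in>{p. p permutes {0..<m}}. (\<Prod>r<m. h r) * (signof p * (\<Prod>i=0..<m. a i (p i))))"
    by (intro sum.cong refl) (simp add: prod.distrib atLeast0LessThan)
  also have "\<dots> = (\<Prod>r<m. h r) * det (mat m m (\<lambda>(r,c). a r c))"
    by (subst det_def'[of _ m]) (auto simp: sum_distrib_left intro!: sum.cong prod.cong)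
  finally show ?thesis .
qed

lemma indep_common_zero_False:
  assumes ind: "lin_indep_fam n f Z" and fin: "finite Z" and cZ: "card Z \<ge> n"
    and x: "x \<in> cvec n" and xnz: "\<exists>j<n. x j \<noteq> 0" and zero: "\<forall>i\<in>Z. lform n (f i) x = 0"
  shows False
proof -
  obtain Z0 where Z0: "Z0 \<subseteq> Z" "card Z0 = n" using obtain_subset_with_card_n[OF cZ] by blast
  have finZ0: "finite Z0" using Z0 fin finite_subset by blast
  have ind0: "lin_indep_fam n f Z0" using lin_indep_subset[OF ind Z0(1) fin] .
  obtain e where e: "bij_betw e {0..<n} Z0" using ex_bij_betw_nat_finite[OF finZ0] Z0(2) by auto
  define M where "M = mat n n (\<lambda>(r,j). f (e r) j)"
  have M: "M \<in> carrier_mat n n" by (simp add: M_def)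
  define v where "v = vec n x"
  have v: "v \<in> carrier_vec n" by (simp add: v_def)
  have vnz: "v \<noteq> 0\<^sub>v n"
  proof
    assume "v = 0\<^sub>v n"
    then have "\<forall>j<n. x j = 0" by (metis index_vec index_zero_vec(1) v_def)
    thus False using xnz by blast
  qed
  have eZ: "\<And>r. r < n \<Longrightarrow> e r \<in> Z" using e Z0(1) by (auto simp: bij_betw_def)
  have "M *\<^sub>v v = 0\<^sub>v n"
  proof (rule eq_vecI)
    fix r assume r: "r < dim_vec (0\<^sub>v n :: complex vec)"
    hence r': "r < n" by simp
    have "(M *\<^sub>v v) $ r = (\<Sum>j<n. f (e r) j * x j)"
      using r' by (simp add: M_def v_def scalar_prod_def atLeast0LessThan)
    also have "\<dots> = 0" using zero eZ[OF r'] by (simp add: lform_def)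
    finally show "(M *\<^sub>v v) $ r = 0\<^sub>v n $ r" using r' by simp
  qed (simp add: M_def)
  hence "det M = 0" using det_0_iff_vec_prod_zero[OF M] v vnz by blast
  hence "det (transpose_mat M) = 0" using det_transpose[OF M] by simp
  then obtain w where w: "w \<in> carrier_vec n" "w \<noteq> 0\<^sub>v n" "transpose_mat M *\<^sub>v w = 0\<^sub>v n"
    using det_0_iff_vec_prod_zero[of "transpose_mat M" n] M by auto
  have wj: "(\<Sum>r<n. f (e r) j * w $ r) = 0" if j: "j < n" for j
  proof -
    have "(transpose_mat M *\<^sub>v w) $ j = (\<Sum>r<n. f (e r) j * w $ r)"
      using j w(1) by (simp add: M_def scalar_prod_def atLeast0LessThan)
    thus ?thesis using w(3) j by simp
  qed
  define c where "c = (\<lambda>i. w $ (the_inv_into {0..<n} e i))"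
  have ce: "c (e r) = w $ r" if "r < n" for r
    using that e by (simp add: c_def the_inv_into_f_f bij_betw_def)
  have "\<forall>j<n. (\<Sum>i\<in>Z0. c i * f i j) = 0"
  proof (intro allI impI)
    fix j assume j: "j < n"
    have "(\<Sum>i\<in>Z0. c i * f i j) = (\<Sum>r\<in>{0..<n}. c (e r) * f (e r) j)"
      using sum.reindex_bij_betw[OF e, of "\<lambda>i. c i * f i j"] by simp
    also have "\<dots> = (\<Sum>r<n. f (e r) j * w $ r)"
      by (auto simp: ce atLeast0LessThan intro!: sum.cong)
    also have "\<dots> = 0" using wj j by simp
    finally show "(\<Sum>i\<in>Z0. c i * f i j) = 0" .
  qed
  hence "\<forall>i\<in>Z0. c i = 0" using ind0 unfolding lin_indep_fam_def by blast
  hence "\<forall>r<n. w $ r = 0" using ce e by (auto simp: bij_betw_def)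
  hence "w = 0\<^sub>v n" using w(1) by (intro eq_vecI) auto
  thus False using w(2) by simp
qed

lemma nc_False:
  assumes nc: "normal_crossings n f J" and fin: "finite J" and x: "x \<in> cvec n"
    and xnz: "\<exists>j<n. x j \<noteq> 0" and ZJ: "Z \<subseteq> J" and zero: "\<forall>i\<in>Z. lform n (f i) x = 0"
    and cZ: "card Z \<ge> n"
  shows False
proof -
  let ?Z' = "{i\<in>J. lform n (f i) x = 0}"
  have "lin_indep_fam n f ?Z'" using nc x xnz unfolding normal_crossings_def by blast
  moreover have "Z \<subseteq> ?Z'" using ZJ zero by auto
  moreover have "finite ?Z'" using fin by simp
  ultimately have "lin_indep_fam n f Z" using lin_indep_subset by blast
  moreover have "finite Z" using ZJ fin finite_subset by blast
  ultimately show False using indep_common_zero_False x xnz zero cZ by blast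
qed

lemma lform_fd: "n = Suc m \<Longrightarrow> lform n (\<lambda>j. if j = n - 1 then 1 else 0) x = x m"
  by (simp add: lform_def if_distrib cong: if_cong)

lemma gpoly_eq: "n = Suc m \<Longrightarrow> gpoly n f i y = (\<Sum>j<m. f i j * y j) + f i m"
  by (simp add: gpoly_def lform_def)

lemma det_nonzero:
  assumes nc: "normal_crossings n f (I \<union> {d})" and finI: "finite I" and dI: "d \<notin> I"
    and nm: "n = Suc m" and fd: "f d = (\<lambda>j. if j = n - 1 then 1 else 0)"
    and s: "bij_betw s {0..<m} S" and SI: "S \<subseteq> I"
  shows "det (mat m m (\<lambda>(r,c). f (s r) c)) \<noteq> 0"
proof
  assume "det (mat m m (\<lambda>(r,c). f (s r) c)) = 0"
  then obtain v where v: "v \<in> carrier_vec m" "v \<noteq> 0\<^sub>v m" "mat m m (\<lambda>(r,c). f (s r) c) *\<^sub>v v = 0\<^sub>v m"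
    using det_0_iff_vec_prod_zero[of "mat m m (\<lambda>(r,c). f (s r) c)" m] by auto
  define x where "x = (\<lambda>j. if j < m then v $ j else 0)"
  have x: "x \<in> cvec n" using nm by (auto simp: cvec_def x_def)
  have xnz: "\<exists>j<n. x j \<noteq> 0"
  proof (rule ccontr)
    assume "\<not> ?thesis"
    hence "\<forall>j<m. v $ j = 0" using nm unfolding x_def
      by (metis less_SucI)
    hence "v = 0\<^sub>v m" using v(1) by (intro eq_vecI) auto
    thus False using v(2) by simp
  qed
  have "\<forall>i\<in>S \<union> {d}. lform n (f i) x = 0"
  proof
    fix i assume i: "i \<in> S \<union> {d}"
    show "lform n (f i) x = 0"
    proof (cases "i = d")
      case True thus ?thesis using lform_fd[OF nm, of x] fd by (simp add: x_def)
    next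
      case False
      then obtain r where r: "r < m" "i = s r" using i s by (auto simp: bij_betw_def)
      have "lform n (f i) x = (\<Sum>j<m. f (s r) j * v $ j)"
        using nm r by (simp add: lform_def x_def)
      also have "\<dots> = (mat m m (\<lambda>(r,c). f (s r) c) *\<^sub>v v) $ r"
        using r v(1) by (simp add: scalar_prod_def atLeast0LessThan)
      also have "\<dots> = 0" using v(3) r by simp
      finally show ?thesis .
    qed
  qed
  moreover have "card (S \<union> {d}) \<ge> n"
  proof -
    have "card S = m" using s by (simp add: bij_betw_same_card[symmetric])
    moreover have "finite S" using SI finI finite_subset by blast
    moreover have "d \<notin> S" using SI dI by blast
    ultimately show ?thesis using nm by simp
  qed
  moreover have "S \<union> {d} \<subseteq> I \<union> {d}" using SI by blast
  ultimately show False using nc_False[OF nc _ x xnz] finI by blast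
qed

lemma exists_point:
  assumes nc: "normal_crossings n f (I \<union> {d})" and finI: "finite I" and dI: "d \<notin> I"
    and nm: "n = Suc m" and fd: "f d = (\<lambda>j. if j = n - 1 then 1 else 0)"
    and t: "bij_betw t {0..<m} T" and TI: "T \<subseteq> I"
  shows "\<exists>p\<in>cvec m. (\<forall>i\<in>T. gpoly n f i p = 0) \<and> (\<forall>j\<in>I - T. gpoly n f j p \<noteq> 0)"
proof -
  define N where "N = mat n n (\<lambda>(r,j). if r < m then f (t r) j else 0)"
  have N: "N \<in> carrier_mat n n" by (simp add: N_def)
  have "det N = 0"
  proof -
    have "det N = (\<Sum>p\<in>{p. p permutes {0..<n}}. signof p * (\<Prod>i=0..<n. N $$ (i, p i)))"
      using det_def'[OF N] .
    also have "\<dots> = 0"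
    proof (intro sum.neutral ballI)
      fix p assume p: "p \<in> {p. p permutes {0..<n}}"
      have "p m < n" using p nm by (auto dest: permutes_in_image)
      hence "N $$ (m, p m) = 0" using nm by (simp add: N_def)
      hence "(\<Prod>i=0..<n. N $$ (i, p i)) = 0" using nm by (intro prod_zero) auto
      thus "signof p * (\<Prod>i=0..<n. N $$ (i, p i)) = 0" by simp
    qed
    finally show ?thesis .
  qed
  then obtain x' where x': "x' \<in> carrier_vec n" "x' \<noteq> 0\<^sub>v n" "N *\<^sub>v x' = 0\<^sub>v n"
    using det_0_iff_vec_prod_zero[OF N] by auto
  define x where "x = (\<lambda>j. if j < n then x' $ j else 0)"
  have x: "x \<in> cvec n" by (auto simp: cvec_def x_def)
  have xnz: "\<exists>j<n. x j \<noteq> 0"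
  proof (rule ccontr)
    assume "\<not> ?thesis"
    hence "\<forall>j<n. x' $ j = 0" by (auto simp: x_def)
    hence "x' = 0\<^sub>v n" using x'(1) by (intro eq_vecI) auto
    thus False using x'(2) by simp
  qed
  have zT: "\<forall>i\<in>T. lform n (f i) x = 0"
  proof
    fix i assume "i \<in> T"
    then obtain r where r: "r < m" "i = t r" using t by (auto simp: bij_betw_def)
    have "lform n (f i) x = (N *\<^sub>v x') $ r"
      using r x'(1) nm by (simp add: N_def lform_def x_def scalar_prod_def atLeast0LessThan)
    also have "\<dots> = 0" using x'(3) r nm by simp
    finally show "lform n (f i) x = 0" .
  qed
  have cT: "card T = m" using t by (simp add: bij_betw_same_card[symmetric])
  have finT: "finite T" using TI finI finite_subset by blast
  have xm: "x m \<noteq> 0"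
  proof
    assume xm0: "x m = 0"
    have "\<forall>i\<in>T \<union> {d}. lform n (f i) x = 0"
      using zT lform_fd[OF nm, of x] fd xm0 by auto
    moreover have "card (T \<union> {d}) \<ge> n" using cT finT TI dI nm by (auto simp: card_insert_if)
    moreover have "T \<union> {d} \<subseteq> I \<union> {d}" using TI by blast
    ultimately show False using nc_False[OF nc _ x xnz] finI by blast
  qed
  define p where "p = (\<lambda>c. if c < m then x c / x m else 0)"
  have p: "p \<in> cvec m" by (auto simp: cvec_def p_def)
  have gp: "gpoly n f i p = lform n (f i) x / x m" for i
  proof -
    have "gpoly n f i p = (\<Sum>j<m. f i j * (x j / x m)) + f i m"
      using gpoly_eq[OF nm] by (simp add: p_def)
    also have "\<dots> = ((\<Sum>j<m. f i j * x j) + f i m * x m) / x m"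
      using xm by (simp add: add_divide_distrib sum_divide_distrib)
    also have "\<dots> = lform n (f i) x / x m"
      using nm by (simp add: lform_def)
    finally show ?thesis .
  qed
  have "\<forall>j\<in>I - T. gpoly n f j p \<noteq> 0"
  proof
    fix j assume j: "j \<in> I - T"
    show "gpoly n f j p \<noteq> 0"
    proof
      assume "gpoly n f j p = 0"
      hence "lform n (f j) x = 0" using gp xm by simp
      hence "\<forall>i\<in>insert j T. lform n (f i) x = 0" using zT by auto
      moreover have "card (insert j T) \<ge> n" using cT finT j nm by simp
      moreover have "insert j T \<subseteq> I \<union> {d}" using TI j by blast
      ultimately show False using nc_False[OF nc _ x xnz] finI by blast
    qed
  qed
  moreover have "\<forall>i\<in>T. gpoly n f i p = 0" using zT gp by simp
  ultimately show ?thesis using p by blast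
qed

lemma wedge_factor:
  assumes y: "y \<in> Ucompl n d f" and nm: "n = Suc m"
  shows "wedge_omega n d f s y = det (mat m m (\<lambda>(r,c). f (s r) c)) / (\<Prod>r<m. gpoly n f (s r) y)"
proof -
  have eq: "(\<lambda>(r,c). f (s r) c / gpoly n f (s r) y) = (\<lambda>(r,c). inverse (gpoly n f (s r) y) * f (s r) c)"
    by (auto simp: divide_inverse fun_eq_iff)
  have "wedge_omega n d f s y = det (mat m m (\<lambda>(r,c). f (s r) c / gpoly n f (s r) y))"
    using y nm by (simp add: wedge_omega_def)
  also have "\<dots> = det (mat m m (\<lambda>(r,c). inverse (gpoly n f (s r) y) * f (s r) c))"
    unfolding eq ..
  also have "\<dots> = (\<Prod>r<m. inverse (gpoly n f (s r) y)) * det (mat m m (\<lambda>(r,c). f (s r) c))"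
    by (rule det_scale_rows)
  also have "\<dots> = det (mat m m (\<lambda>(r,c). f (s r) c)) / (\<Prod>r<m. gpoly n f (s r) y)"
    using prod_inversef[of "\<lambda>r. gpoly n f (s r) y" "{..<m}"]
    by (simp add: divide_inverse comp_def)
  finally show ?thesis .
qed

lemma core:
  assumes nc: "normal_crossings n f (I \<union> {d})" and finI: "finite I" and Id: "I \<subseteq> {1..d-1}"
    and nm: "n = Suc m" and fd: "f d = (\<lambda>j. if j = n - 1 then 1 else 0)"
    and ca: "central_arrangement n d f" and d1: "d \<ge> 1"
    and e: "\<forall>S\<in>{S. S \<subseteq> I \<and> card S = m}. bij_betw (e S) {0..<m} S"
    and h: "\<forall>y. (\<Sum>S\<in>{S. S \<subseteq> I \<and> card S = m}. a S * wedge_omega n d f (e S) y) = 0"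
    and T: "T \<in> {S. S \<subseteq> I \<and> card S = m}"
  shows "a T = 0"
proof -
  define SS where "SS = {S. S \<subseteq> I \<and> card S = m}"
  have finSS: "finite SS" using finI by (simp add: SS_def)
  have dI: "d \<notin> I" using Id d1 by auto
  define D where "D = (\<lambda>S. det (mat m m (\<lambda>(r,c). f (e S r) c)))"
  have DT: "D T \<noteq> 0" unfolding D_def
    using det_nonzero[OF nc finI dI nm fd, of "e T" T] e T by auto
  have eSI: "e S r \<in> I" if "S \<in> SS" "r < m" for S r
  proof -
    have "bij_betw (e S) {0..<m} S" using e that by (simp add: SS_def)
    thus ?thesis using that by (auto simp: bij_betw_def SS_def)
  qed
  have gpos: "gpoly n f i y \<noteq> 0" if "y \<in> Ucompl n d f" "i \<in> I" for i y
    using that Id by (auto simp: Ucompl_def)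
  have wS: "wedge_omega n d f (e S) y = D S / (\<Prod>i\<in>S. gpoly n f i y)"
    if S: "S \<in> SS" and y: "y \<in> Ucompl n d f" for S y
  proof -
    have "(\<Prod>r<m. gpoly n f (e S r) y) = (\<Prod>i\<in>S. gpoly n f i y)"
      using prod.reindex_bij_betw[of "e S" "{0..<m}" S "\<lambda>i. gpoly n f i y"] e S
      by (simp add: SS_def atLeast0LessThan)
    thus ?thesis using wedge_factor[OF y nm, of "e S"] by (simp add: D_def)
  qed
  obtain p where p: "p \<in> cvec m" "\<forall>i\<in>T. gpoly n f i p = 0" "\<forall>j\<in>I - T. gpoly n f j p \<noteq> 0"
    using exists_point[OF nc finI dI nm fd, of "e T" T] e T by auto
  define Q where "Q = (\<lambda>i. [:gpoly n f i p:] + (\<Sum>c<m. monom (f i c) (Suc c)))"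
  define yt where "yt = (\<lambda>t::complex. \<lambda>c. if c < m then p c + t ^ Suc c else 0)"
  have C1: "gpoly n f i (yt t) = poly (Q i) t" for i t
  proof -
    have "gpoly n f i (yt t) = (\<Sum>j<m. f i j * p j) + (\<Sum>j<m. f i j * t ^ Suc j) + f i m"
      using gpoly_eq[OF nm] by (simp add: yt_def algebra_simps sum.distrib)
    also have "\<dots> = poly (Q i) t"
      using gpoly_eq[OF nm, of f i p] by (simp add: Q_def poly_sum poly_monom)
    finally show ?thesis .
  qed
  have C2: "Q i \<noteq> 0" if i: "i \<in> {1..d-1}" for i
  proof
    assume Q0: "Q i = 0"
    have "f i c = 0" if c: "c < m" for c
    proof -
      have "coeff (Q i) (Suc c) = f i c"
        using c by (simp add: Q_def coeff_sum coeff_pCons)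
      thus ?thesis using Q0 by simp
    qed
    hence "\<forall>j<n. f i j = f i m * f d j" using nm fd by (auto simp: less_Suc_eq)
    moreover have "i \<noteq> d" "i \<in> {1..d}" "d \<in> {1..d}" using i d1 by auto
    ultimately show False using ca unfolding central_arrangement_def by blast
  qed
  define R where "R = (\<Union>i\<in>{1..d-1}. {t. poly (Q i) t = 0})"
  have finR: "finite R" unfolding R_def
  proof (intro finite_UN_I)
    fix i assume "i \<in> {1..d-1}"
    thus "finite {t. poly (Q i) t = 0}" using C2 poly_roots_finite by blast
  qed simp
  have C4: "yt t \<in> Ucompl n d f" if "t \<notin> R" for t
    using that nm C1 by (auto simp: Ucompl_def cvec_def yt_def R_def)
  define H where "H = (\<Sum>S\<in>SS. smult (a S * D S) (\<Prod>i\<in>I - S. Q i))"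
  have C5: "poly H t = 0" if t: "t \<notin> R" for t
  proof -
    let ?y = "yt t"
    have y: "?y \<in> Ucompl n d f" using C4 t .
    have "poly H t = (\<Sum>S\<in>SS. a S * D S * (\<Prod>i\<in>I - S. gpoly n f i ?y))"
      by (simp add: H_def poly_sum poly_prod C1)
    also have "\<dots> = (\<Sum>S\<in>SS. a S * wedge_omega n d f (e S) ?y) * (\<Prod>i\<in>I. gpoly n f i ?y)"
      unfolding sum_distrib_right
    proof (intro sum.cong refl)
      fix S assume S: "S \<in> SS"
      have SI: "S \<subseteq> I" using S by (simp add: SS_def)
      have nz: "(\<Prod>i\<in>S. gpoly n f i ?y) \<noteq> 0"
        using gpos[OF y] SI finI finite_subset by (subst prod_zero_iff) auto
      have "(\<Prod>i\<in>I. gpoly n f i ?y) = (\<Prod>i\<in>I - S. gpoly n f i ?y) * (\<Prod>i\<in>S. gpoly n f i ?y)"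
        using prod.subset_diff[OF SI finI] by simp
      thus "a S * D S * (\<Prod>i\<in>I - S. gpoly n f i ?y) = a S * wedge_omega n d f (e S) ?y * (\<Prod>i\<in>I. gpoly n f i ?y)"
        using wS[OF S y] nz by (simp add: field_simps)
    qed
    also have "\<dots> = 0" using h by (simp add: SS_def)
    finally show ?thesis .
  qed
  have H0: "H = 0"
  proof (rule ccontr)
    assume "H \<noteq> 0"
    hence "finite {t. poly H t = 0}" by (rule poly_roots_finite)
    moreover have "- R \<subseteq> {t. poly H t = 0}" using C5 by auto
    ultimately have "finite (- R)" by (rule finite_subset[rotated])
    hence "finite (UNIV :: complex set)" using finR by (metis Compl_partition finite_Un)
    thus False using infinite_UNIV_char_0 by blast
  qed
  have "poly H 0 = (\<Sum>S\<in>SS. a S * D S * (\<Prod>i\<in>I - S. gpoly n f i p))"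
    by (simp add: H_def poly_sum poly_prod Q_def poly_monom)
  also have "\<dots> = (\<Sum>S\<in>SS. if S = T then a T * D T * (\<Prod>i\<in>I - T. gpoly n f i p) else 0)"
  proof (intro sum.cong refl)
    fix S assume S: "S \<in> SS"
    show "a S * D S * (\<Prod>i\<in>I - S. gpoly n f i p) = (if S = T then a T * D T * (\<Prod>i\<in>I - T. gpoly n f i p) else 0)"
    proof (cases "S = T")
      case False
      have "\<not> T \<subseteq> S"
      proof
        assume "T \<subseteq> S"
        moreover have "finite S" using S finI finite_subset by (auto simp: SS_def)
        moreover have "card T = card S" using S T by (simp add: SS_def)
        ultimately have "T = S" using card_subset_eq by blast
        thus False using False by simp
      qed
      then obtain i where i: "i \<in> T" "i \<notin> S" by blast
      have "i \<in> I - S" using i T by auto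
      moreover have "gpoly n f i p = 0" using p(2) i by blast
      ultimately have "(\<Prod>i\<in>I - S. gpoly n f i p) = 0" using finI by (intro prod_zero) auto
      thus ?thesis using False by simp
    qed simp
  qed
  also have "\<dots> = a T * D T * (\<Prod>i\<in>I - T. gpoly n f i p)"
    using T finSS by (simp add: SS_def)
  finally have "a T * D T * (\<Prod>i\<in>I - T. gpoly n f i p) = 0" using H0 by simp
  moreover have "(\<Prod>i\<in>I - T. gpoly n f i p) \<noteq> 0" using p(3) finI by (subst prod_zero_iff) auto
  ultimately show "a T = 0" using DT by simp
qed

lemma sum_fun_apply': "(\<Sum>v\<in>t. (F v :: 'a \<Rightarrow> 'b::comm_monoid_add)) y = (\<Sum>v\<in>t. F v y)"
  by (induct t rule: infinite_finite_induct) (simp_all add: plus_fun_apply)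

theorem lemma4p8:
  fixes n d :: nat and f :: "nat \<Rightarrow> nat \<Rightarrow> complex" and k :: int and I :: "nat set"
  assumes "n \<ge> 1"
    and "central_arrangement n d f"
    and "indecomposable n d f"
    and "d \<ge> 1"
    and "f d = (\<lambda>j. if j = n - 1 then 1 else 0)"
    and "I \<subseteq> {1..d - 1}"
    and "int (card I) = k - 1"
    and "k \<ge> int n"
    and "normal_crossings n f (I \<union> {d})"
  shows "vector_space.dim fscale (Vprime n d f I) = nat (k - 1) choose (n - 1)"
proof -
  note ca = assms(2) and d1 = assms(4) and fd = assms(5) and Id = assms(6) and nc = assms(9)
  obtain m where nm: "n = Suc m" using assms(1) by (cases n) auto
  interpret V: vector_space fscale by (rule vs_fscale)
  have finI: "finite I" using Id finite_subset by blast
  have dI: "d \<notin> I" using Id d1 by auto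
  define SS where "SS = {S. S \<subseteq> I \<and> card S = m}"
  define e :: "nat set \<Rightarrow> nat \<Rightarrow> nat" where "e = (\<lambda>S r. sorted_list_of_set S ! r)"
  have e: "bij_betw (e S) {0..<m} S" if "S \<in> SS" for S
  proof -
    have fS: "finite S" using that finI finite_subset by (auto simp: SS_def)
    show ?thesis unfolding e_def
      by (rule bij_betw_nth) (use fS that in \<open>auto simp: SS_def atLeast0LessThan\<close>)
  qed
  define \<omega> where "\<omega> = (\<lambda>S. wedge_omega n d f (e S))"
  define B where "B = \<omega> ` SS"
  define G where "G = {wedge_omega n d f s | s. \<forall>r<n - 1. s r \<in> I}"
  have core': "a T = 0" if h: "\<forall>y. (\<Sum>S\<in>SS. a S * \<omega> S y) = 0" and T: "T \<in> SS" for a T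
    using core[OF nc finI Id nm fd ca d1, of e a T] e h T by (auto simp: SS_def \<omega>_def)
  have inj: "inj_on \<omega> SS"
  proof
    fix S T assume S: "S \<in> SS" and T: "T \<in> SS" and eq: "\<omega> S = \<omega> T"
    show "S = T"
    proof (rule ccontr)
      assume ne: "S \<noteq> T"
      define a where "a = (\<lambda>X. (if X = S then 1 else 0) - (if X = T then 1 else (0::complex)))"
      have "\<forall>y. (\<Sum>X\<in>SS. a X * \<omega> X y) = 0"
      proof
        fix y
        have "(\<Sum>X\<in>SS. a X * \<omega> X y) = (\<Sum>X\<in>SS. (if X = S then \<omega> X y else 0) - (if X = T then \<omega> X y else 0))"
          by (intro sum.cong refl) (auto simp: a_def)
        also have "\<dots> = \<omega> S y - \<omega> T y"
          using S T finI by (simp add: sum_subtractf SS_def)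
        finally show "(\<Sum>X\<in>SS. a X * \<omega> X y) = 0" using eq by simp
      qed
      hence "a S = 0" by (rule core'[OF _ S])
      thus False using ne by (simp add: a_def)
    qed
  qed
  have finB: "finite B"
  proof -
    have "finite SS" using finI by (simp add: SS_def)
    thus ?thesis by (simp add: B_def)
  qed
  have indep: "V.independent B"
    apply (rule V.independent_if_scalars_zero[OF finB])
    subgoal premises P for u v
    proof -
      have sum0: "(\<Sum>w\<in>B. fscale (u w) w) = 0" using P(1) .
      have vB: "v \<in> B" using P(2) .
      define a where "a = (\<lambda>S. u (\<omega> S))"
      have h0: "\<forall>y. (\<Sum>S\<in>SS. a S * \<omega> S y) = 0"
      proof
        fix y
        have "(\<Sum>S\<in>SS. a S * \<omega> S y) = (\<Sum>S\<in>SS. (\<lambda>w. u w * w y) (\<omega> S))"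
          by (simp add: a_def)
        also have "\<dots> = (\<Sum>w\<in>B. u w * w y)"
          unfolding B_def using sum.reindex[OF inj, of "\<lambda>w. u w * w y"]
          by (simp add: comp_def)
        also have "\<dots> = (\<Sum>w\<in>B. fscale (u w) w) y"
          by (simp add: sum_fun_apply' fscale_def)
        also have "\<dots> = 0" using sum0 by simp
        finally show "(\<Sum>S\<in>SS. a S * \<omega> S y) = 0" .
      qed
      obtain S where S: "S \<in> SS" "v = \<omega> S" using vB unfolding B_def by blast
      have aS: "a S = 0" by (rule core'[OF h0 S(1)])
      thus "u v = 0" using S(2) by (simp add: a_def)
    qed
    done
  have BG: "B \<subseteq> G"
  proof
    fix w assume "w \<in> B"
    then obtain S where S: "S \<in> SS" "w = \<omega> S" by (auto simp: B_def)
    have "\<forall>r<n - 1. e S r \<in> I" using e[OF S(1)] S(1) nm by (auto simp: bij_betw_def SS_def)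
    thus "w \<in> G" using S by (auto simp: G_def \<omega>_def)
  qed
  have GB: "G \<subseteq> V.span B"
  proof
    fix w assume "w \<in> G"
    then obtain s where s: "\<forall>r<m. s r \<in> I" and w: "w = wedge_omega n d f s"
      using nm by (auto simp: G_def)
    define Ds where "Ds = det (mat m m (\<lambda>(r,c). f (s r) c))"
    show "w \<in> V.span B"
    proof (cases "inj_on s {0..<m}")
      case True
      define S where "S = s ` {0..<m}"
      have S: "S \<in> SS" using True s by (auto simp: SS_def S_def card_image)
      have bs: "bij_betw s {0..<m} S" using True by (simp add: S_def bij_betw_def)
      define DS where "DS = det (mat m m (\<lambda>(r,c). f (e S r) c))"
      have DS: "DS \<noteq> 0" unfolding DS_def
        using det_nonzero[OF nc finI dI nm fd e[OF S]] S by (auto simp: SS_def)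
      have "w = fscale (Ds / DS) (\<omega> S)"
      proof
        fix y
        show "w y = fscale (Ds / DS) (\<omega> S) y"
        proof (cases "y \<in> Ucompl n d f")
          case True
          have p1: "(\<Prod>r<m. gpoly n f (s r) y) = (\<Prod>i\<in>S. gpoly n f i y)"
            using prod.reindex_bij_betw[OF bs, of "\<lambda>i. gpoly n f i y"] by (simp add: atLeast0LessThan)
          have p2: "(\<Prod>r<m. gpoly n f (e S r) y) = (\<Prod>i\<in>S. gpoly n f i y)"
            using prod.reindex_bij_betw[OF e[OF S], of "\<lambda>i. gpoly n f i y"] by (simp add: atLeast0LessThan)
          show ?thesis using wedge_factor[OF True nm, of s] wedge_factor[OF True nm, of "e S"] p1 p2 DS
            by (simp add: w fscale_def \<omega>_def Ds_def DS_def)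
        next
          case False
          thus ?thesis by (simp add: w fscale_def \<omega>_def wedge_omega_def)
        qed
      qed
      moreover have "\<omega> S \<in> B" using S by (simp add: B_def)
      ultimately show ?thesis using V.span_scale V.span_base by metis
    next
      case False
      then obtain r1 r2 where r: "r1 < m" "r2 < m" "r1 \<noteq> r2" "s r1 = s r2"
        by (auto simp: inj_on_def)
      have "Ds = 0" unfolding Ds_def
        by (rule det_identical_rows[of _ m r1 r2]) (use r in auto)
      have "w = 0"
      proof
        fix y
        show "w y = 0 y"
        proof (cases "y \<in> Ucompl n d f")
          case True
          thus ?thesis using wedge_factor[OF True nm, of s] \<open>Ds = 0\<close> by (simp add: w Ds_def)
        qed (simp add: w wedge_omega_def)
      qed
      thus ?thesis using V.span_zero by simp
    qed
  qed
  have spanEq: "V.span G = V.span B"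
  proof
    show "V.span G \<subseteq> V.span B" using GB V.span_minimal V.subspace_span by blast
    show "V.span B \<subseteq> V.span G" using BG V.span_mono by blast
  qed
  have "V.dim (Vprime n d f I) = V.dim (V.span B)"
    using spanEq by (simp add: Vprime_def G_def)
  also have "\<dots> = card B" using V.dim_span_eq_card_independent[OF indep] .
  also have "\<dots> = card SS" using card_image[OF inj] by (simp add: B_def)
  also have "\<dots> = card I choose m" using n_subsets[OF finI] by (simp add: SS_def)
  also have "\<dots> = nat (k - 1) choose (n - 1)"
  proof -
    have "card I = nat (k - 1)" using assms(7) by linarith
    thus ?thesis using nm by simp
  qed
  finally show ?thesis .
qed

end
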